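(* The four identities (J1) $x\wedge y\approx y\wedge x$, (J2) $x\wedge(y\wedge z)\approx(x\wedge y)\wedge z$, (J4) $x''\approx x$, (J5) $x'\approx (x\wedge y)'\wedge(x\wedge y')'$ form a 4-base for the variety $\mathbb{BA}$ of Boolean algebras (in the language $\langle\wedge,{}'\rangle$). In particular, the idempotent law $x\wedge x\approx x$ follows from (J1), (J2), (J4), (J5).
   Context: Algebras are of type $\langle \wedge, {}'\rangle$ with $\wedge$ binary and ${}'$ unary. The variety $\mathbb{BA}$ of Boolean algebras in this language consists of the algebras $\langle B,\wedge,{}'\rangle$ obtained from Boolean algebras by keeping only meet and complement (equivalently, the variety generated by the two-element Boolean algebra $\mathbf 2$ with meet and complement). A base for a variety is an independent set of identities (no identity in the set follows from the others) that defines the variety; an $n$-base is a base with exactly $n$ identities. *)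

theory Defs
  imports Main
begin

datatype trm = Var nat | Meet trm trm | Cpl trm

type_synonym identity = "trm \<times> trm"

fun subst :: "(nat \<Rightarrow> trm) \<Rightarrow> trm \<Rightarrow> trm" where
  "subst \<sigma> (Var n) = \<sigma> n"
| "subst \<sigma> (Meet s t) = Meet (subst \<sigma> s) (subst \<sigma> t)"
| "subst \<sigma> (Cpl s) = Cpl (subst \<sigma> s)"

inductive derivable :: "identity set \<Rightarrow> trm \<Rightarrow> trm \<Rightarrow> bool" for E where
  ax: "(s, t) \<in> E \<Longrightarrow> derivable E (subst \<sigma> s) (subst \<sigma> t)"
| refl: "derivable E t t"
| sym: "derivable E s t \<Longrightarrow> derivable E t s"
| trans: "derivable E s t \<Longrightarrow> derivable E t u \<Longrightarrow> derivable E s u"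
| cong_meet: "derivable E s1 t1 \<Longrightarrow> derivable E s2 t2 \<Longrightarrow> derivable E (Meet s1 s2) (Meet t1 t2)"
| cong_cpl: "derivable E s t \<Longrightarrow> derivable E (Cpl s) (Cpl t)"

fun eval :: "('a \<Rightarrow> 'a \<Rightarrow> 'a) \<Rightarrow> ('a \<Rightarrow> 'a) \<Rightarrow> (nat \<Rightarrow> 'a) \<Rightarrow> trm \<Rightarrow> 'a" where
  "eval m c v (Var n) = v n"
| "eval m c v (Meet s t) = m (eval m c v s) (eval m c v t)"
| "eval m c v (Cpl s) = c (eval m c v s)"

text \<open>An identity holds in the variety BA iff it holds in the two-element
  Boolean algebra 2 = (bool, conjunction, negation), which generates BA.\<close>
definition holds_in_BA :: "identity \<Rightarrow> bool" where
  "holds_in_BA e \<longleftrightarrow> (\<forall>v :: nat \<Rightarrow> bool. eval (\<and>) Not v (fst e) = eval (\<and>) Not v (snd e))"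

definition defines_BA :: "identity set \<Rightarrow> bool" where
  "defines_BA E \<longleftrightarrow> (\<forall>s t. derivable E s t \<longleftrightarrow> holds_in_BA (s, t))"

definition independent :: "identity set \<Rightarrow> bool" where
  "independent E \<longleftrightarrow> (\<forall>e \<in> E. \<not> derivable (E - {e}) (fst e) (snd e))"

definition is_n_base_BA :: "nat \<Rightarrow> identity set \<Rightarrow> bool" where
  "is_n_base_BA n E \<longleftrightarrow> defines_BA E \<and> independent E \<and> finite E \<and> card E = n"

abbreviation "vx \<equiv> Var 0"
abbreviation "vy \<equiv> Var 1"
abbreviation "vz \<equiv> Var 2"

definition J1 :: identity where "J1 = (Meet vx vy, Meet vy vx)"
definition J2 :: identity where "J2 = (Meet vx (Meet vy vz), Meet (Meet vx vy) vz)"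
definition J4 :: identity where "J4 = (Cpl (Cpl vx), vx)"
definition J5 :: identity where
  "J5 = (Cpl vx, Meet (Cpl (Meet vx vy)) (Cpl (Meet vx (Cpl vy))))"

end

theory Submission
  imports Defs
begin


lemma eval_subst: "eval m c v (subst \<sigma> t) = eval m c (\<lambda>n. eval m c v (\<sigma> n)) t"
  by (induction t) auto

lemma sound:
  assumes E: "\<forall>e\<in>E. \<forall>v. eval m c v (fst e) = eval m c v (snd e)"
    and d: "derivable E s t"
  shows "eval m c v s = eval m c v t"
  using d
proof (induction arbitrary: v rule: derivable.induct)
  case (ax s t \<sigma>)
  then show ?case using E by (force simp: eval_subst)
qed auto

datatype t3 = P0 | P1 | P2

fun m3 :: "t3 \<Rightarrow> t3 \<Rightarrow> t3" where
  "m3 P0 P0 = P0" | "m3 P0 P1 = P0" | "m3 P1 P0 = P0" | "m3 P0 P2 = P1" | "m3 P2 P0 = P1"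
| "m3 P1 P1 = P1" | "m3 P1 P2 = P2" | "m3 P2 P1 = P2" | "m3 P2 P2 = P2"

fun c3 :: "t3 \<Rightarrow> t3" where
  "c3 P0 = P2" | "c3 P1 = P1" | "c3 P2 = P0"

lemma t3_all: "(\<forall>x::t3. P x) = (P P0 \<and> P P1 \<and> P P2)"
  by (metis t3.exhaust)

lemma EJ_distinct: "J1 \<noteq> J2" "J1 \<noteq> J4" "J1 \<noteq> J5" "J2 \<noteq> J4" "J2 \<noteq> J5" "J4 \<noteq> J5"
  by (simp_all add: J1_def J2_def J4_def J5_def)

lemma card4: "finite {J1, J2, J4, J5} \<and> card {J1, J2, J4, J5} = 4"
  using EJ_distinct by simp

lemma indep_by_model:
  assumes "\<forall>e\<in>E'. \<forall>v. eval m c v (fst e) = eval m c v (snd e)"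
    and "eval m c v (fst e0) \<noteq> eval m c v (snd e0)"
  shows "\<not> derivable E' (fst e0) (snd e0)"
  using sound[OF assms(1)] assms(2) by blast

lemma n1: "\<not> derivable {J2, J4, J5} (fst J1) (snd J1)"
proof (rule indep_by_model)
  show "\<forall>e\<in>{J2, J4, J5}. \<forall>v. eval (\<lambda>x y. x) id v (fst e) = eval (\<lambda>x y. x) id v (snd e)"
    by (simp add: J2_def J4_def J5_def)
  show "eval (\<lambda>x y. x) id (\<lambda>n. n = 0) (fst J1) \<noteq> eval (\<lambda>x y. x) id (\<lambda>n. n = 0) (snd J1)"
    by (simp add: J1_def)
qed

lemma n2: "\<not> derivable {J1, J4, J5} (fst J2) (snd J2)"
proof (rule indep_by_model)
  have a: "\<And>x y. m3 x y = m3 y x" by (case_tac x; case_tac y; simp)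
  have b: "\<And>x. c3 (c3 x) = x" by (case_tac x; simp)
  have d: "\<And>x y. c3 x = m3 (c3 (m3 x y)) (c3 (m3 x (c3 y)))" by (case_tac x; case_tac y; simp)
  show "\<forall>e\<in>{J1, J4, J5}. \<forall>v. eval m3 c3 v (fst e) = eval m3 c3 v (snd e)"
    unfolding J1_def J4_def J5_def
    apply (simp only: ball_simps fst_conv snd_conv eval.simps insert_iff empty_iff)
    using a b d by blast
  show "eval m3 c3 (\<lambda>n. if n = 0 then P0 else P2) (fst J2) \<noteq> eval m3 c3 (\<lambda>n. if n = 0 then P0 else P2) (snd J2)"
    by (simp add: J2_def)
qed

lemma n4: "\<not> derivable {J1, J2, J5} (fst J4) (snd J4)"
proof (rule indep_by_model)
  show "\<forall>e\<in>{J1, J2, J5}. \<forall>v. eval (\<and>) (\<lambda>x. True) v (fst e) = eval (\<and>) (\<lambda>x. True) v (snd e)"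
    by (auto simp add: J1_def J2_def J5_def)
  show "eval (\<and>) (\<lambda>x. True) (\<lambda>n. False) (fst J4) \<noteq> eval (\<and>) (\<lambda>x. True) (\<lambda>n. False) (snd J4)"
    by (simp add: J4_def)
qed

lemma n5: "\<not> derivable {J1, J2, J4} (fst J5) (snd J5)"
proof (rule indep_by_model)
  show "\<forall>e\<in>{J1, J2, J4}. \<forall>v. eval (\<and>) id v (fst e) = eval (\<and>) id v (snd e)"
    by (auto simp add: J1_def J2_def J4_def)
  show "eval (\<and>) id (\<lambda>n. n = 0) (fst J5) \<noteq> eval (\<and>) id (\<lambda>n. n = 0) (snd J5)"
    by (simp add: J5_def)
qed

lemma indep: "independent {J1, J2, J4, J5}"
  unfolding independent_def
proof (intro ballI)
  fix e assume "e \<in> {J1, J2, J4, J5}"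
  then consider "e = J1" | "e = J2" | "e = J4" | "e = J5" by blast
  then show "\<not> derivable ({J1, J2, J4, J5} - {e}) (fst e) (snd e)"
  proof cases
    case 1
    have E: "{J1, J2, J4, J5} - {e} = {J2, J4, J5}" using 1 EJ_distinct by auto
    show ?thesis using n1 E 1 by simp
  next
    case 2
    have E: "{J1, J2, J4, J5} - {e} = {J1, J4, J5}" using 2 EJ_distinct by auto
    show ?thesis using n2 E 2 by simp
  next
    case 3
    have E: "{J1, J2, J4, J5} - {e} = {J1, J2, J5}" using 3 EJ_distinct by auto
    show ?thesis using n4 E 3 by simp
  next
    case 4
    have E: "{J1, J2, J4, J5} - {e} = {J1, J2, J4}" using 4 EJ_distinct by auto
    show ?thesis using n5 E 4 by simp
  qed
qed

lemma soundBA: "derivable {J1, J2, J4, J5} s t \<Longrightarrow> holds_in_BA (s, t)"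
  unfolding holds_in_BA_def
proof (intro allI)
  fix v :: "nat \<Rightarrow> bool"
  assume d: "derivable {J1, J2, J4, J5} s t"
  have "\<forall>e\<in>{J1, J2, J4, J5}. \<forall>v. eval (\<and>) Not v (fst e) = eval (\<and>) Not v (snd e)"
    by (auto simp add: J1_def J2_def J4_def J5_def)
  from sound[OF this d] show "eval (\<and>) Not v (fst (s, t)) = eval (\<and>) Not v (snd (s, t))" by simp
qed


lemma BA3: "(a::'b::boolean_algebra) = sup (inf b a) (inf (- b) a)"
  by (metis boolean_algebra.disj_cancel_right inf_sup_distrib2 inf_top_left)
lemma split_eq: "inf (a::'b::boolean_algebra) x = inf a y \<Longrightarrow> inf (-a) x = inf (-a) y \<Longrightarrow> x = y"
  by (metis BA3)
lemma proj1: "inf (a::'b::boolean_algebra) (sup (inf a A) (inf (-a) B)) = inf a A"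
  by (simp add: inf_sup_distrib1 inf_assoc[symmetric])
lemma proj2: "inf (-(a::'b::boolean_algebra)) (sup (inf a A) (inf (-a) B)) = inf (-a) B"
  by (simp add: inf_sup_distrib1 inf_assoc[symmetric])
lemma infdist: "inf (a::'b::boolean_algebra) (inf P Q) = inf (inf a P) (inf a Q)"
  by (metis inf.left_idem inf.assoc inf.left_commute)
lemma BA1: "inf (sup (inf (a::'b::boolean_algebra) A) (inf (- a) B)) (sup (inf a C) (inf (- a) D)) = sup (inf a (inf A C)) (inf (- a) (inf B D))"
  (is "inf ?P ?Q = ?R")
proof (rule split_eq[where a=a])
  have "inf a (inf ?P ?Q) = inf (inf a ?P) (inf a ?Q)" by (rule infdist)
  also have "\<dots> = inf (inf a A) (inf a C)" by (simp only: proj1)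
  also have "\<dots> = inf a (inf A C)" by (rule infdist[symmetric])
  also have "\<dots> = inf a ?R" by (rule proj1[symmetric])
  finally show "inf a (inf ?P ?Q) = inf a ?R" .
  have "inf (-a) (inf ?P ?Q) = inf (inf (-a) ?P) (inf (-a) ?Q)" by (rule infdist)
  also have "\<dots> = inf (inf (-a) B) (inf (-a) D)" by (simp only: proj2)
  also have "\<dots> = inf (-a) (inf B D)" by (rule infdist[symmetric])
  also have "\<dots> = inf (-a) ?R" by (rule proj2[symmetric])
  finally show "inf (-a) (inf ?P ?Q) = inf (-a) ?R" .
qed
lemma inf_compl_local: "inf (a::'b::boolean_algebra) (- (inf a x)) = inf a (- x)"
  by (simp add: inf_sup_distrib1)
lemma BA2: "- (sup (inf (a::'b::boolean_algebra) A) (inf (- a) B)) = sup (inf a (- A)) (inf (- a) (- B))"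
  (is "- ?P = ?R")
proof (rule split_eq[where a=a])
  have "inf a (- ?P) = inf a (- (inf a ?P))" by (rule inf_compl_local[symmetric])
  also have "\<dots> = inf a (- (inf a A))" by (simp only: proj1)
  also have "\<dots> = inf a (- A)" by (rule inf_compl_local)
  also have "\<dots> = inf a ?R" by (rule proj1[symmetric])
  finally show "inf a (- ?P) = inf a ?R" .
  have "inf (-a) (- ?P) = inf (-a) (- (inf (-a) ?P))" by (rule inf_compl_local[symmetric])
  also have "\<dots> = inf (-a) (- (inf (-a) B))" by (simp only: proj2)
  also have "\<dots> = inf (-a) (- B)" by (rule inf_compl_local)
  also have "\<dots> = inf (-a) ?R" by (rule proj2[symmetric])
  finally show "inf (-a) (- ?P) = inf (-a) ?R" .
qed
fun vars :: "trm \<Rightarrow> nat set" where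
  "vars (Var n) = {n}" | "vars (Meet s t) = vars s \<union> vars t" | "vars (Cpl s) = vars s"

lemma finite_vars: "finite (vars t)" by (induction t) auto

lemma shannon:
  fixes w :: "nat \<Rightarrow> 'b::boolean_algebra"
  shows "eval inf uminus w t = sup (inf (w n) (eval inf uminus (w(n := top)) t)) (inf (- w n) (eval inf uminus (w(n := bot)) t))"
proof (induction t)
  case (Var m)
  show ?case
  proof (cases "m = n")
    case True then show ?thesis by simp
  next
    case False then show ?thesis using BA3[of "w m" "w n"] by simp
  qed
next
  case (Meet s t)
  then show ?case by (simp only: eval.simps BA1[symmetric])
next
  case (Cpl s)
  then show ?case by (simp only: eval.simps BA2)
qed

lemma eval_const:
  fixes w :: "nat \<Rightarrow> 'b::boolean_algebra"
  shows "\<forall>n\<in>vars s. w n = top \<or> w n = bot \<Longrightarrow> eval inf uminus w s = (if eval (\<and>) Not (\<lambda>n. w n = top) s then top else bot)"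
  by (induction s) auto

lemma ba_complete:
  fixes w :: "nat \<Rightarrow> 'b::boolean_algebra"
  assumes h: "holds_in_BA (s, t)"
  shows "eval inf uminus w s = eval inf uminus w t"
proof -
  obtain K where K: "\<forall>n \<in> vars s \<union> vars t. n < K"
    using finite_vars[of s] finite_vars[of t] by (meson finite_UnI finite_nat_set_iff_bounded)
  have P: "\<forall>w' :: nat \<Rightarrow> 'b. (\<forall>n<k. w' n = top \<or> w' n = bot) \<longrightarrow> eval inf uminus w' s = eval inf uminus w' t"
    if "k \<le> K" for k
    using that
  proof (induction k rule: inc_induct)
    case base
    show ?case
    proof (intro allI impI)
      fix w' :: "nat \<Rightarrow> 'b" assume a: "\<forall>n<K. w' n = top \<or> w' n = bot"
      have "eval inf uminus w' s = (if eval (\<and>) Not (\<lambda>n. w' n = top) s then top else bot)"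
        using a K by (intro eval_const) auto
      moreover have "eval inf uminus w' t = (if eval (\<and>) Not (\<lambda>n. w' n = top) t then top else bot)"
        using a K by (intro eval_const) auto
      moreover have "eval (\<and>) Not (\<lambda>n. w' n = top) s = eval (\<and>) Not (\<lambda>n. w' n = top) t"
        using h unfolding holds_in_BA_def by simp
      ultimately show "eval inf uminus w' s = eval inf uminus w' t" by simp
    qed
  next
    case (step k)
    show ?case
    proof (intro allI impI)
      fix w' :: "nat \<Rightarrow> 'b" assume a: "\<forall>n<k. w' n = top \<or> w' n = bot"
      have t1: "\<forall>n<Suc k. (w'(k := top)) n = top \<or> (w'(k := top)) n = bot" using a by auto
      have t2: "\<forall>n<Suc k. (w'(k := bot)) n = top \<or> (w'(k := bot)) n = bot" using a by auto
      have e1: "eval inf uminus (w'(k := top)) s = eval inf uminus (w'(k := top)) t"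
        using step.IH t1 by blast
      have e2: "eval inf uminus (w'(k := bot)) s = eval inf uminus (w'(k := bot)) t"
        using step.IH t2 by blast
      show "eval inf uminus w' s = eval inf uminus w' t"
        using shannon[of w' s k] shannon[of w' t k] e1 e2 by simp
    qed
  qed
  from P[of 0] show ?thesis by simp
qed

locale hunt =
  fixes m :: "'a \<Rightarrow> 'a \<Rightarrow> 'a" and c :: "'a \<Rightarrow> 'a"
  assumes comm: "m x y = m y x"
  and assoc: "m x (m y z) = m (m x y) z"
  and inv: "c (c x) = x"
  and j5: "c x = m (c (m x y)) (c (m x (c y)))"
begin
lemma h_idem: "m a a = a"
proof -
  have c_0_7: "\<And>X1 X2 X3. (m X1 (m X2 X3)) = (m X3 (m X1 X2))" by (metis assoc comm)
  have c_0_9: "\<And>X1 X2 X3. (m X1 (m X2 X3)) = (m X3 (m X2 X1))" by (metis c_0_7 comm)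
  have c_0_10: "\<And>X1 X2. (m (c (m X1 X2)) (c (m (c X2) X1))) = (c X1)" by (metis comm j5)
  have c_0_11: "\<And>X1 X2 X3. (m (c (m X1 X2)) (m X3 (c (m X1 (c X2))))) = (m X3 (c X1))" by (metis c_0_7 c_0_9 j5)
  have c_0_13: "\<And>X1 X2. (m (c (m X1 X2)) (c (m (c X1) X2))) = (c X2)" by (metis c_0_10 comm)
  have c_0_14: "\<And>X1 X2 X3. (m (c (m X1 X2)) (m X3 (c (m (c X2) X1)))) = (m X3 (c X1))" by (metis c_0_10 c_0_7 c_0_9)
  have c_0_15: "\<And>X1 X2. (m X1 (c (m (c X2) X1))) = (m X2 (c (m (c X1) X2)))" by (metis c_0_10 c_0_11 comm inv)
  have c_0_16: "\<And>X1 X2 X3. (m (c (m X1 X2)) (m X3 (c (m (c X1) X2)))) = (m X3 (c X2))" by (metis c_0_13 c_0_7 c_0_9)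
  have c_0_17: "\<And>X1 X2. (m X1 (c X1)) = (m X2 (c X2))" by (metis c_0_14 c_0_15 c_0_16)
  have c_0_18: "\<And>X1 X2 X3. (m X1 (c X1)) = (m X2 (m X3 (c (m X2 X3))))" by (metis assoc c_0_17)
  have c_0_19: "\<And>X1 X2. (m (c (m X1 X1)) (c (m X2 (c X2)))) = (c X1)" by (metis c_0_13 c_0_17 inv)
  have c_0_20: "\<And>X1 X2. (m X1 (c X1)) = (m X2 (m X2 (c X2)))" by (metis assoc c_0_18 c_0_19)
  have c_0_21: "\<And>X1 X2 X3. (m X1 (c X1)) = (m X2 (m X3 (c X3)))" by (metis c_0_17 c_0_20)
  have c_0_22: "\<And>X1 X2. (m (c (m X1 X2)) (c (m X2 (c X1)))) = (c X2)" by (metis comm j5)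
  have c_0_23: "\<And>X1 X2. (m X1 (c (m (c X2) (m X1 (c (m X1 X2)))))) = (m X1 X2)" by (metis c_0_9 inv j5)
  have c_0_24: "\<And>X1 X2 X3. (m X1 (c X1)) = (m X2 (m (c X2) X3))" by (metis assoc c_0_21 comm)
  have c_0_26: "\<And>X1 X2. (m X1 (c (m (c X2) (m X1 (c (m X2 X1)))))) = (m X2 X1)" by (metis c_0_22 c_0_9 inv j5)
  have c_0_27: "\<And>X1 X2. (m X1 (c (m X2 (c X2)))) = (m X1 X1)" by (metis c_0_23 c_0_24 inv)
  have c_0_28: "\<And>X1 X2. (m (c (m X1 (c X1))) (c (m X2 X2))) = (c X2)" by (metis c_0_17 inv j5)
  have c_0_30: "\<And>X1. (m X1 X1) = X1" by (metis c_0_26 c_0_27 c_0_28 inv)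
  show ?thesis by (metis c_0_30)
qed
lemma h_zero: "m a (m b (c b)) = m b (c b)"
proof -
  have c_0_7: "\<And>X1 X2 X3. (m X1 (m X2 X3)) = (m X3 (m X1 X2))" by (metis assoc comm)
  have c_0_9: "\<And>X1 X2 X3. (m X1 (m X2 X3)) = (m X3 (m X2 X1))" by (metis c_0_7 comm)
  have c_0_10: "\<And>X1 X2. (m (c (m X1 X2)) (c (m (c X2) X1))) = (c X1)" by (metis comm j5)
  have c_0_11: "\<And>X1 X2 X3. (m (c (m X1 X2)) (m X3 (c (m X1 (c X2))))) = (m X3 (c X1))" by (metis c_0_7 c_0_9 j5)
  have c_0_13: "\<And>X1 X2. (m (c (m X1 X2)) (c (m (c X1) X2))) = (c X2)" by (metis c_0_10 comm)
  have c_0_14: "\<And>X1 X2 X3. (m (c (m X1 X2)) (m X3 (c (m (c X2) X1)))) = (m X3 (c X1))" by (metis c_0_10 c_0_7 c_0_9)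
  have c_0_15: "\<And>X1 X2. (m X1 (c (m (c X2) X1))) = (m X2 (c (m (c X1) X2)))" by (metis c_0_10 c_0_11 comm inv)
  have c_0_16: "\<And>X1 X2 X3. (m (c (m X1 X2)) (m X3 (c (m (c X1) X2)))) = (m X3 (c X2))" by (metis c_0_13 c_0_7 c_0_9)
  have c_0_17: "\<And>X1 X2. (m X1 (c X1)) = (m X2 (c X2))" by (metis c_0_14 c_0_15 c_0_16)
  have c_0_18: "\<And>X1 X2 X3. (m X1 (c X1)) = (m X2 (m X3 (c (m X2 X3))))" by (metis assoc c_0_17)
  have c_0_19: "\<And>X1 X2. (m (c (m X1 X1)) (c (m X2 (c X2)))) = (c X1)" by (metis c_0_13 c_0_17 inv)
  have c_0_21: "\<And>X1 X2 X3. (m X1 (m (c X1) X2)) = (m X2 (m X3 (c X3)))" by (metis c_0_17 c_0_7)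
  have c_0_22: "\<And>X1 X2. (m X1 (c X1)) = (m X2 (m X2 (c X2)))" by (metis assoc c_0_18 c_0_19)
  have c_0_24: "\<And>X1 X2 X3. (m X1 (m (c X1) X2)) = (m X3 (c X3))" by (metis c_0_21 c_0_22)
  have c_0_26: "\<And>X1 X2 X3. (m X1 (c X1)) = (m X2 (m X3 (c X2)))" by (metis assoc c_0_14 c_0_24 inv)
  show ?thesis by (metis c_0_26 c_0_7 comm)
qed
lemma h_one: "m a (c (m b (c b))) = a"
proof -
  have c_0_7: "\<And>X1 X2 X3. (m X1 (m X2 X3)) = (m X3 (m X1 X2))" by (metis assoc comm)
  have c_0_9: "\<And>X1 X2 X3. (m X1 (m X2 X3)) = (m X3 (m X2 X1))" by (metis c_0_7 comm)
  have c_0_10: "\<And>X1 X2. (m (c (m X1 X2)) (c (m (c X2) X1))) = (c X1)" by (metis comm j5)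
  have c_0_11: "\<And>X1 X2 X3. (m (c (m X1 X2)) (m X3 (c (m X1 (c X2))))) = (m X3 (c X1))" by (metis c_0_7 c_0_9 j5)
  have c_0_13: "\<And>X1 X2. (m (c (m X1 X2)) (c (m (c X1) X2))) = (c X2)" by (metis c_0_10 comm)
  have c_0_15: "\<And>X1 X2 X3. (m (c (m X1 X2)) (m X3 (c (m (c X2) X1)))) = (m X3 (c X1))" by (metis c_0_10 c_0_7 c_0_9)
  have c_0_16: "\<And>X1 X2. (m X1 (c (m (c X2) X1))) = (m X2 (c (m (c X1) X2)))" by (metis c_0_10 c_0_11 comm inv)
  have c_0_17: "\<And>X1 X2 X3. (m (c (m X1 X2)) (m X3 (c (m (c X1) X2)))) = (m X3 (c X2))" by (metis c_0_13 c_0_7 c_0_9)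
  have c_0_19: "\<And>X1 X2. (m X1 (c X1)) = (m X2 (c X2))" by (metis c_0_15 c_0_16 c_0_17)
  have c_0_21: "\<And>X1 X2 X3. (m X1 (c X1)) = (m X2 (m X3 (c (m X2 X3))))" by (metis assoc c_0_19)
  have c_0_22: "\<And>X1 X2. (m (c (m X1 X1)) (c (m X2 (c X2)))) = (c X1)" by (metis c_0_13 c_0_19 inv)
  have c_0_24: "\<And>X1 X2. (m X1 (c X1)) = (m X2 (m X2 (c X2)))" by (metis assoc c_0_21 c_0_22)
  have c_0_26: "\<And>X1 X2 X3. (m X1 (c X1)) = (m X2 (m X3 (c X3)))" by (metis c_0_19 c_0_24)
  have c_0_28: "\<And>X1 X2. (m X1 (c (m (c X2) (m X1 (c (m X1 X2)))))) = (m X1 X2)" by (metis assoc c_0_10 comm inv j5)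
  have c_0_29: "\<And>X1 X2 X3. (m X1 (c X1)) = (m X2 (m (c X2) X3))" by (metis assoc c_0_26 comm)
  have c_0_31: "\<And>X1 X2. (m X1 (c (m X1 (m (c X2) (c (m X1 X2)))))) = (m X1 X2)" by (metis assoc comm inv j5)
  have c_0_32: "\<And>X1 X2. (m X1 (c (m (c X2) (m X1 (c (m X2 X1)))))) = (m X2 X1)" by (metis assoc c_0_13 comm inv j5)
  have c_0_33: "\<And>X1 X2. (m X1 (c (m X2 (c X2)))) = (m X1 X1)" by (metis c_0_28 c_0_29 inv)
  have c_0_34: "\<And>X1 X2. (m (c (m X1 (c X1))) (c (m X2 X2))) = (c X2)" by (metis c_0_19 inv j5)
  have c_0_36: "\<And>X1. (m X1 X1) = X1" by (metis c_0_32 c_0_33 c_0_34 inv)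
  show ?thesis by (metis assoc c_0_19 c_0_22 c_0_31 c_0_36 comm)
qed
lemma h_absorb: "m a (c (m (c a) (c b))) = a"
proof -
  have c_0_7: "\<And>X1 X2 X3. (m X1 (m X2 X3)) = (m X3 (m X1 X2))" by (metis assoc comm)
  have c_0_9: "\<And>X1 X2 X3. (m X1 (m X2 X3)) = (m X3 (m X2 X1))" by (metis c_0_7 comm)
  have c_0_10: "\<And>X1 X2. (m (c (m X1 X2)) (c (m (c X2) X1))) = (c X1)" by (metis comm j5)
  have c_0_11: "\<And>X1 X2 X3. (m (c (m X1 X2)) (m X3 (c (m X1 (c X2))))) = (m X3 (c X1))" by (metis c_0_7 c_0_9 j5)
  have c_0_13: "\<And>X1 X2. (m (c (m X1 X2)) (c (m (c X1) X2))) = (c X2)" by (metis c_0_10 comm)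
  have c_0_14: "\<And>X1 X2 X3. (m (c (m X1 X2)) (m X3 (c (m (c X2) X1)))) = (m X3 (c X1))" by (metis c_0_10 c_0_7 c_0_9)
  have c_0_15: "\<And>X1 X2. (m X1 (c (m (c X2) X1))) = (m X2 (c (m (c X1) X2)))" by (metis c_0_10 c_0_11 comm inv)
  have c_0_16: "\<And>X1 X2 X3. (m (c (m X1 X2)) (m X3 (c (m (c X1) X2)))) = (m X3 (c X2))" by (metis c_0_13 c_0_7 c_0_9)
  have c_0_17: "\<And>X1 X2. (m X1 (c X1)) = (m X2 (c X2))" by (metis c_0_14 c_0_15 c_0_16)
  have c_0_18: "\<And>X1 X2 X3. (m X1 (c X1)) = (m X2 (m X3 (c (m X2 X3))))" by (metis assoc c_0_17)
  have c_0_19: "\<And>X1 X2. (m (c (m X1 X1)) (c (m X2 (c X2)))) = (c X1)" by (metis c_0_13 c_0_17 inv)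
  have c_0_20: "\<And>X1 X2 X3. (m X1 (m (c X1) X2)) = (m X2 (m X3 (c X3)))" by (metis c_0_17 c_0_7)
  have c_0_21: "\<And>X1 X2. (m X1 (c X1)) = (m X2 (m X2 (c X2)))" by (metis assoc c_0_18 c_0_19)
  have c_0_22: "\<And>X1 X2. (m X1 (c (m (c X2) (m X1 (c (m X1 X2)))))) = (m X1 X2)" by (metis assoc c_0_10 comm inv j5)
  have c_0_23: "\<And>X1 X2 X3. (m X1 (m (c X1) X2)) = (m X3 (c X3))" by (metis c_0_20 c_0_21)
  have c_0_24: "\<And>X1 X2. (m X1 (c (m (c X2) (m X1 (c (m X2 X1)))))) = (m X2 X1)" by (metis assoc c_0_13 comm inv j5)
  have c_0_25: "\<And>X1 X2. (m X1 (c (m X2 (c X2)))) = (m X1 X1)" by (metis c_0_22 c_0_23 inv)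
  have c_0_26: "\<And>X1 X2. (m (c (m X1 (c X1))) (c (m X2 X2))) = (c X2)" by (metis c_0_17 inv j5)
  have c_0_27: "\<And>X1 X2 X3. (m X1 (m X2 X3)) = (m X2 (m X1 X3))" by (metis assoc comm)
  have c_0_28: "\<And>X1. (m X1 X1) = X1" by (metis c_0_24 c_0_25 c_0_26 inv)
  have c_0_29: "\<And>X1 X2. (m X1 (m X1 X2)) = (m X1 X2)" by (metis assoc c_0_27 c_0_28)
  have c_0_31: "\<And>X1 X2. (m (c X1) (c (m X1 X2))) = (c X1)" by (metis c_0_11 c_0_29 comm j5)
  have c_0_33: "\<And>X1 X2. (m X1 (c (m (c X1) X2))) = X1" by (metis c_0_31 inv)
  show ?thesis by (metis c_0_33)
qed
lemma h_distrib: "m a (c (m (c b) (c d))) = c (m (c (m a b)) (c (m a d)))"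
proof -
  have c_0_8: "\<And>X1 X2 X3. (m X1 (m X2 X3)) = (m X2 (m X1 X3))" by (metis assoc comm)
  have c_0_9: "\<And>X1 X2. (m (c (m X1 X2)) (c (m (c X2) X1))) = (c X1)" by (metis comm j5)
  have c_0_10: "\<And>X1 X2 X3. (m (c (m X1 X2)) (m X3 (c (m X1 (c X2))))) = (m X3 (c X1))" by (metis c_0_8 j5)
  have c_0_12: "\<And>X1 X2. (m (c (m X1 X2)) (c (m (c X1) X2))) = (c X2)" by (metis c_0_9 comm)
  have c_0_13: "\<And>X1 X2 X3. (m (c (m X1 X2)) (m X3 (c (m (c X2) X1)))) = (m X3 (c X1))" by (metis c_0_8 c_0_9)
  have c_0_14: "\<And>X1 X2. (m X1 (c (m (c X2) X1))) = (m X2 (c (m (c X1) X2)))" by (metis c_0_10 c_0_9 comm inv)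
  have c_0_15: "\<And>X1 X2 X3. (m (c (m X1 X2)) (m X3 (c (m (c X1) X2)))) = (m X3 (c X2))" by (metis c_0_12 c_0_8)
  have c_0_16: "\<And>X1 X2. (m X1 (c X1)) = (m X2 (c X2))" by (metis c_0_13 c_0_14 c_0_15)
  have c_0_17: "\<And>X1 X2 X3. (m X1 (m X2 X3)) = (m X3 (m X1 X2))" by (metis assoc comm)
  have c_0_18: "\<And>X1 X2 X3. (m X1 (c X1)) = (m X2 (m X3 (c (m X2 X3))))" by (metis assoc c_0_16)
  have c_0_19: "\<And>X1 X2. (m (c (m X1 X1)) (c (m X2 (c X2)))) = (c X1)" by (metis c_0_12 c_0_16 inv)
  have c_0_20: "\<And>X1 X2 X3. (m X1 (m (c X1) X2)) = (m X2 (m X3 (c X3)))" by (metis c_0_16 c_0_17)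
  have c_0_21: "\<And>X1 X2. (m X1 (c X1)) = (m X2 (m X2 (c X2)))" by (metis assoc c_0_18 c_0_19)
  have c_0_22: "\<And>X1 X2. (m X1 (c (m (c X2) (m X1 (c (m X1 X2)))))) = (m X1 X2)" by (metis assoc c_0_9 comm inv j5)
  have c_0_23: "\<And>X1 X2 X3. (m X1 (m (c X1) X2)) = (m X3 (c X3))" by (metis c_0_20 c_0_21)
  have c_0_24: "\<And>X1 X2. (m X1 (c (m (c X2) (m X1 (c (m X2 X1)))))) = (m X2 X1)" by (metis assoc c_0_12 comm inv j5)
  have c_0_25: "\<And>X1 X2. (m X1 (c (m X2 (c X2)))) = (m X1 X1)" by (metis c_0_22 c_0_23 inv)
  have c_0_26: "\<And>X1 X2. (m (c (m X1 (c X1))) (c (m X2 X2))) = (c X2)" by (metis c_0_16 inv j5)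
  have c_0_27: "\<And>X1. (m X1 X1) = X1" by (metis c_0_24 c_0_25 c_0_26 inv)
  have c_0_28: "\<And>X1 X2. (m X1 (m X1 X2)) = (m X1 X2)" by (metis assoc c_0_27 c_0_8)
  have c_0_29: "\<And>X1 X2. (m (c (m X1 X2)) (c (m X2 (c X1)))) = (c X2)" by (metis comm j5)
  have c_0_30: "\<And>X1 X2. (m (c X1) (c (m X1 X2))) = (c X1)" by (metis c_0_10 c_0_28 comm j5)
  have c_0_31: "\<And>X1 X2 X3. (m (c (m X1 X2)) (m X3 (c (m X2 (c X1))))) = (m X3 (c X2))" by (metis c_0_29 c_0_8)
  have c_0_32: "\<And>X1 X2. (m X1 (c (m (c X1) X2))) = X1" by (metis c_0_30 inv)
  have c_0_33: "\<And>X1 X2. (m (c X1) (c (m X2 X1))) = (c X1)" by (metis c_0_28 c_0_29 c_0_31 comm)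
  have c_0_34: "\<And>X1 X2. (m X1 (c (m X2 (c X1)))) = X1" by (metis c_0_27 c_0_31 c_0_32 comm inv)
  have c_0_35: "\<And>X1 X2. (m X1 (c (m X1 X2))) = (m X1 (c X2))" by (metis c_0_15 c_0_30 comm inv)
  have c_0_36: "\<And>X1 X2 X3. (m (c X1) (m X2 (c (m X3 X1)))) = (m X2 (c X1))" by (metis c_0_33 c_0_8)
  have c_0_37: "\<And>X1 X2 X3. (m (c (m X1 (m X2 X3))) (c (m X3 (m X1 (c X2))))) = (c (m X3 X1))"
  proof -
    fix X1 X2 X3
    have e1: "m X1 (m X2 X3) = m X2 (m X3 X1)" by (metis assoc comm)
    have e2: "m X3 (m X1 (c X2)) = m (m X3 X1) (c X2)" by (rule assoc)
    show "(m (c (m X1 (m X2 X3))) (c (m X3 (m X1 (c X2))))) = (c (m X3 X1))"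
      unfolding e1 e2 by (rule c_0_29)
  qed
  have c_0_38: "\<And>X1 X2 X3. (m (c (m X1 (c X2))) (c (m X1 (m X2 X3)))) = (c (m X1 (c (m X2 (c X3)))))" by (metis assoc c_0_10 c_0_29 c_0_34 comm inv)
  have c_0_39: "\<And>X1 X2 X3. (m X1 (m (c (m X1 X2)) X3)) = (m X1 (m (c X2) X3))" by (simp only: assoc c_0_35)
  have c_0_40: "\<And>X1 X2 X3. (m (c (m X1 (c X2))) (c (m X3 X1))) = (c (m X1 (c (m X2 (c X3)))))" by (metis c_0_36 c_0_37 c_0_38 comm)
  have c_0_41: "\<And>X1 X2 X3. (m X1 (c (m (c (m X1 X2)) X3))) = (m X1 (c (m (c X2) X3)))" by (metis c_0_35 c_0_39)
  have c_0_43: "\<And>X1 X2 X3. (c (m (c (m X1 X2)) (c (m X3 X1)))) = (m X1 (c (m (c X2) (c X3))))" by (metis c_0_30 c_0_40 c_0_41 comm inv)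
  have c_0_45: "\<And>X1 X2 X3. (c (m (c (m X1 X2)) (c (m X1 X3)))) = (m X1 (c (m (c X2) (c X3))))" by (metis c_0_43 comm)
  show ?thesis by (metis c_0_45)
qed
lemma h_zeq: "m a (c a) = m b (c b)"
proof -
  have c_0_7: "\<And>X1 X2 X3. (m X1 (m X2 X3)) = (m X3 (m X1 X2))" by (metis assoc comm)
  have c_0_9: "\<And>X1 X2 X3. (m X1 (m X2 X3)) = (m X3 (m X2 X1))" by (metis c_0_7 comm)
  have c_0_10: "\<And>X1 X2. (m (c (m X1 X2)) (c (m (c X2) X1))) = (c X1)" by (metis comm j5)
  have c_0_11: "\<And>X1 X2 X3. (m (c (m X1 X2)) (m X3 (c (m X1 (c X2))))) = (m X3 (c X1))" by (metis c_0_7 c_0_9 j5)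
  have c_0_13: "\<And>X1 X2. (m (c (m X1 X2)) (c (m (c X1) X2))) = (c X2)" by (metis c_0_10 comm)
  have c_0_15: "\<And>X1 X2 X3. (m (c (m X1 X2)) (m X3 (c (m (c X2) X1)))) = (m X3 (c X1))" by (metis c_0_10 c_0_7 c_0_9)
  have c_0_16: "\<And>X1 X2. (m X1 (c (m (c X2) X1))) = (m X2 (c (m (c X1) X2)))" by (metis c_0_10 c_0_11 comm inv)
  have c_0_17: "\<And>X1 X2 X3. (m (c (m X1 X2)) (m X3 (c (m (c X1) X2)))) = (m X3 (c X2))" by (metis c_0_13 c_0_7 c_0_9)
  have c_0_19: "\<And>X1 X2. (m X1 (c X1)) = (m X2 (c X2))" by (metis c_0_15 c_0_16 c_0_17)
  show ?thesis by (metis c_0_19)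
qed
lemma h_le_trans: "m x y = x \<Longrightarrow> m y z = y \<Longrightarrow> m x z = x"
proof -
  assume a: "m x y = x" and b: "m y z = y"
  have "m x z = m (m x y) z" using a by simp
  also have "\<dots> = m x (m y z)" by (simp add: assoc)
  finally show ?thesis using a b by simp
qed
lemma h_sup_inf: "c (m (c x) (c (m y z))) = m (c (m (c x) (c y))) (c (m (c x) (c z)))"
proof -
  have "m (c x) (c (m y z)) = c (m (c (m (c x) (c y))) (c (m (c x) (c z))))"
    using h_distrib[of "c x" "c y" "c z"] by (simp add: inv)
  then have "c (m (c x) (c (m y z))) = c (c (m (c (m (c x) (c y))) (c (m (c x) (c z)))))" by simp
  then show ?thesis by (simp add: inv)
qed
lemma h_inf_le1: "m (m x y) x = m x y"
proof -
  have "m (m x y) x = m x (m x y)" by (rule comm)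
  also have "\<dots> = m (m x x) y" by (rule assoc)
  finally show ?thesis by (simp add: h_idem)
qed
lemma h_le_inf: "m x y = x \<Longrightarrow> m x z = x \<Longrightarrow> m x (m y z) = x" by (simp add: assoc)
lemma h_sup_ge1: "m x (c (m (c x) (c y))) = x" by (rule h_absorb)
lemma h_sup_ge2: "m y (c (m (c x) (c y))) = y"
proof -
  have "m (c x) (c y) = m (c y) (c x)" by (rule comm)
  then show ?thesis using h_absorb[of y x] by simp
qed
lemma h_sup_least: "m y x = y \<Longrightarrow> m z x = z \<Longrightarrow> m (c (m (c y) (c z))) x = c (m (c y) (c z))"
proof -
  assume a: "m y x = y" and b: "m z x = z"
  have "m x (c (m (c y) (c z))) = c (m (c (m x y)) (c (m x z)))" by (rule h_distrib)
  then show ?thesis using a b by (simp add: comm)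
qed
lemma h_compl_top: "c (m (c x) (c (c x))) = c (m y (c y))"
proof -
  have "m (c x) (c (c x)) = m x (c x)" by (simp add: inv comm)
  then show ?thesis using h_zeq[of x y] by simp
qed
end

quotient_type q = trm / "derivable {J1, J2, J4, J5}"
  by (auto intro!: equivpI reflpI sympI transpI intro: derivable.refl derivable.sym derivable.trans)

lift_definition qm :: "q \<Rightarrow> q \<Rightarrow> q" is Meet by (rule derivable.cong_meet)
lift_definition qc :: "q \<Rightarrow> q" is Cpl by (rule derivable.cong_cpl)

lemma axE: "(s, t) \<in> {J1, J2, J4, J5} \<Longrightarrow> derivable {J1, J2, J4, J5} (subst \<sigma> s) (subst \<sigma> t)"
  by (rule derivable.ax)

interpretation Q: hunt qm qc
proof unfold_locales
  fix x y z :: q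
  show "qm x y = qm y x"
    apply transfer
    subgoal for a b using axE[of "Meet vx vy" "Meet vy vx" "\<lambda>n. if n = 0 then a else b"]
      by (simp add: J1_def) done
  show "qm x (qm y z) = qm (qm x y) z"
    apply transfer
    subgoal for a b d using axE[of "Meet vx (Meet vy vz)" "Meet (Meet vx vy) vz" "\<lambda>n. if n = 0 then a else if n = 1 then b else d"]
      by (simp add: J2_def) done
  show "qc (qc x) = x"
    apply transfer
    subgoal for a using axE[of "Cpl (Cpl vx)" "vx" "\<lambda>n. a"]
      by (simp add: J4_def) done
  show "qc x = qm (qc (qm x y)) (qc (qm x (qc y)))"
    apply transfer
    subgoal for a b using axE[of "Cpl vx" "Meet (Cpl (Meet vx vy)) (Cpl (Meet vx (Cpl vy)))" "\<lambda>n. if n = 0 then a else b"]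
      by (simp add: J5_def) done
qed

instantiation q :: boolean_algebra
begin
definition "inf_q = qm"
definition "uminus_q = qc"
definition "sup_q a b = qc (qm (qc a) (qc b))"
definition "bot_q = qm (abs_q vx) (qc (abs_q vx))"
definition "top_q = qc (qm (abs_q vx) (qc (abs_q vx)))"
definition "minus_q a b = qm a (qc (b::q))"
definition "less_eq_q a b = (qm a b = a)"
definition "less_q a b = (qm a b = a \<and> a \<noteq> (b::q))"
instance
  apply standard
  unfolding inf_q_def uminus_q_def sup_q_def bot_q_def top_q_def minus_q_def less_eq_q_def less_q_def
  subgoal by (metis Q.comm)
  subgoal by (rule Q.h_idem)
  subgoal by (rule Q.h_le_trans)
  subgoal by (metis Q.comm)
  subgoal by (rule Q.h_inf_le1)
  subgoal by (simp add: Q.assoc[symmetric] Q.h_idem)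
  subgoal by (rule Q.h_le_inf)
  subgoal by (rule Q.h_sup_ge1)
  subgoal by (rule Q.h_sup_ge2)
  subgoal by (rule Q.h_sup_least)
  subgoal by (rule Q.h_sup_inf | rule HOL.trans[OF Q.comm Q.h_zero] | rule Q.h_one | rule Q.h_zeq | rule Q.h_compl_top | rule HOL.refl)
  subgoal by (rule Q.h_sup_inf | rule HOL.trans[OF Q.comm Q.h_zero] | rule Q.h_one | rule Q.h_zeq | rule Q.h_compl_top | rule HOL.refl)
  subgoal by (rule Q.h_sup_inf | rule HOL.trans[OF Q.comm Q.h_zero] | rule Q.h_one | rule Q.h_zeq | rule Q.h_compl_top | rule HOL.refl)
  subgoal by (rule Q.h_sup_inf | rule HOL.trans[OF Q.comm Q.h_zero] | rule Q.h_one | rule Q.h_zeq | rule Q.h_compl_top | rule HOL.refl)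
  subgoal by (rule Q.h_sup_inf | rule HOL.trans[OF Q.comm Q.h_zero] | rule Q.h_one | rule Q.h_zeq | rule Q.h_compl_top | rule HOL.refl)
  subgoal by (rule Q.h_sup_inf | rule HOL.trans[OF Q.comm Q.h_zero] | rule Q.h_one | rule Q.h_zeq | rule Q.h_compl_top | rule HOL.refl)
  done
end

lemma eval_q: "eval qm qc (\<lambda>n. abs_q (Var n)) t = abs_q t"
  by (induction t) (simp_all add: qm.abs_eq qc.abs_eq)

lemma completeBA:
  assumes "holds_in_BA (s, t)"
  shows "derivable {J1, J2, J4, J5} s t"
proof -
  have "eval inf uminus (\<lambda>n. abs_q (Var n)) s = eval inf uminus (\<lambda>n. abs_q (Var n)) t"
    by (rule ba_complete[OF assms])
  then have "abs_q s = abs_q t" by (simp add: inf_q_def uminus_q_def eval_q)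
  then show ?thesis by (simp add: q.abs_eq_iff)
qed

theorem theorem2p2:
  shows "is_n_base_BA 4 {J1, J2, J4, J5} \<and> derivable {J1, J2, J4, J5} (Meet vx vx) vx"
proof
  have d: "defines_BA {J1, J2, J4, J5}"
    unfolding defines_BA_def using soundBA completeBA by blast
  show "is_n_base_BA 4 {J1, J2, J4, J5}"
    unfolding is_n_base_BA_def using d indep card4 by blast
  show "derivable {J1, J2, J4, J5} (Meet vx vx) vx"
    by (rule completeBA) (simp add: holds_in_BA_def)
qed

end
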